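(* (1) For any $\lambda\in(0,1)$ and $\mu\in[0,1)$: $\mathbb{L}^{>\lambda}(\mathrm{QBA}|\mathrm{ND})\not\subseteq\mathbb{L}^{>\mu}(\mathrm{QBA}|\mathrm{D})$. (2) For any $\lambda\in[0,1)$: $\mathbb{L}^{=1}(\mathrm{QBA}|\mathrm{ND})\not\subseteq\mathbb{L}^{>\lambda}(\mathrm{QBA}|\mathrm{D})$. (3) For any $\lambda\in[0,1)$: $\mathbb{L}^{=1}(\mathrm{QBA}|\mathrm{D})\not\subseteq\mathbb{L}^{>\lambda}(\mathrm{QBA}|\mathrm{ND})$.
   Context: A quantum automaton is a tuple $\mathcal{A}=(\mathcal{H},|s_0\rangle,\Sigma,\{U_\sigma:\sigma\in\Sigma\},F)$ where $\mathcal{H}$ is a finite-dimensional complex Hilbert space, $|s_0\rangle$ a unit vector, $\Sigma$ a finite alphabet, each $U_\sigma$ unitary, and $F$ a subspace. Let $w=\sigma_1\sigma_2\cdots\in\Sigma^\omega$. Non-disturbing: the run is $|s_n\rangle=U_{\sigma_n}\cdots U_{\sigma_1}|s_0\rangle$ and $f^{\mathrm{ND}}_{\mathcal{A}}(w)=\sup_{|\psi\rangle}\sup_{\{n_i\}}\inf_{i\ge1}|\langle\psi|s_{n_i}\rangle|^2$ (sup over unit $|\psi\rangle\in F$ and strictly increasing sequences $0\le n_1<n_2<\cdots$). Disturbing: for unit $|\psi\rangle\in F$ and checkpoints $\{n_i\}$, the run is $|s_0\rangle$ and for $n\ge1$: $|s_n\rangle=U_{\sigma_n}|\psi\rangle$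 if $n-1=n_i$ for some $i$, else $|s_n\rangle=U_{\sigma_n}|s_{n-1}\rangle$; $f^{\mathrm{D}}_{\mathcal{A}}(w)=\sup_{|\psi\rangle}\sup_{\{n_i\}}\inf_{i\ge1}|\langle\psi|s_{n_i}\rangle|^2$ with this run. For $X\in\{\mathrm{ND},\mathrm{D}\}$: $\mathcal{L}^{>\lambda}(\mathcal{A}|X)=\{w:f^X_{\mathcal{A}}(w)>\lambda\}$, $\mathcal{L}^{=1}(\mathcal{A}|X)=\{w:f^X_{\mathcal{A}}(w)=1\}$, and $\mathbb{L}^{>\lambda}(\mathrm{QBA}|X)$, $\mathbb{L}^{=1}(\mathrm{QBA}|X)$ are the classes of all such languages over all quantum automata $\mathcal{A}$. *)

theory Defs
  imports "Jordan_Normal_Form.Matrix"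
begin

text \<open>Alphabets are finite sets of natural numbers;
  omega-words are functions nat => nat, with w 0 the first letter sigma_1.\<close>

definition braket :: "complex vec \<Rightarrow> complex vec \<Rightarrow> complex" where
  "braket \<psi> s = scalar_prod (map_vec cnj \<psi>) s"

definition adj :: "complex mat \<Rightarrow> complex mat" where
  "adj U = transpose_mat (map_mat cnj U)"

definition unitary_mat :: "nat \<Rightarrow> complex mat \<Rightarrow> bool" where
  "unitary_mat n U \<longleftrightarrow> U \<in> carrier_mat n n \<and> U * adj U = 1\<^sub>m n \<and> adj U * U = 1\<^sub>m n"

definition unit_vec :: "nat \<Rightarrow> complex vec \<Rightarrow> bool" where
  "unit_vec n v \<longleftrightarrow> v \<in> carrier_vec n \<and> braket v v = 1"

definition is_subspace :: "nat \<Rightarrow> complex vec set \<Rightarrow> bool" where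
  "is_subspace n F \<longleftrightarrow> F \<subseteq> carrier_vec n \<and> 0\<^sub>v n \<in> F \<and>
     (\<forall>u\<in>F. \<forall>v\<in>F. u + v \<in> F) \<and> (\<forall>c. \<forall>v\<in>F. c \<cdot>\<^sub>v v \<in> F)"

record qauto =
  qdim :: nat
  qinit :: "complex vec"
  qtrans :: "nat \<Rightarrow> complex mat"
  qacc :: "complex vec set"

definition qauto_wf :: "nat set \<Rightarrow> qauto \<Rightarrow> bool" where
  "qauto_wf \<Sigma> A \<longleftrightarrow> unit_vec (qdim A) (qinit A) \<and>
     (\<forall>\<sigma>\<in>\<Sigma>. unitary_mat (qdim A) (qtrans A \<sigma>)) \<and> is_subspace (qdim A) (qacc A)"

primrec nd_run :: "qauto \<Rightarrow> (nat \<Rightarrow> nat) \<Rightarrow> nat \<Rightarrow> complex vec" where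
  "nd_run A w 0 = qinit A"
| "nd_run A w (Suc k) = qtrans A (w k) *\<^sub>v nd_run A w k"

text \<open>Disturbing run for target psi and checkpoints ns (ns 0 = n_1):
  s_{k+1} = U_{sigma_{k+1}} psi if k is a checkpoint, else U_{sigma_{k+1}} s_k.\<close>
primrec d_run :: "qauto \<Rightarrow> (nat \<Rightarrow> nat) \<Rightarrow> complex vec \<Rightarrow> (nat \<Rightarrow> nat) \<Rightarrow> nat \<Rightarrow> complex vec" where
  "d_run A w \<psi> ns 0 = qinit A"
| "d_run A w \<psi> ns (Suc k) =
     qtrans A (w k) *\<^sub>v (if k \<in> range ns then \<psi> else d_run A w \<psi> ns k)"

datatype mode = ND | D

definition run :: "mode \<Rightarrow> qauto \<Rightarrow> (nat \<Rightarrow> nat) \<Rightarrow> complex vec \<Rightarrow> (nat \<Rightarrow> nat) \<Rightarrow> nat \<Rightarrow> complex vec" where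
  "run X A w \<psi> ns = (case X of ND \<Rightarrow> nd_run A w | D \<Rightarrow> d_run A w \<psi> ns)"

text \<open>Acceptance value: sup over unit psi in F and strictly increasing checkpoint
  sequences of inf_i |<psi|s_{n_i}>|^2. The supremum of the empty family
  (F = {0}) is taken to be 0 (inserting 0 does not change it otherwise, all values being >= 0).\<close>
definition fval :: "mode \<Rightarrow> qauto \<Rightarrow> (nat \<Rightarrow> nat) \<Rightarrow> real" where
  "fval X A w = Sup (insert 0
     {Inf (range (\<lambda>i. (cmod (braket \<psi> (run X A w \<psi> ns (ns i))))\<^sup>2)) | \<psi> ns.
        \<psi> \<in> qacc A \<and> unit_vec (qdim A) \<psi> \<and> strict_mono ns})"

definition lang_gt :: "mode \<Rightarrow> nat set \<Rightarrow> qauto \<Rightarrow> real \<Rightarrow> (nat \<Rightarrow> nat) set" where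
  "lang_gt X \<Sigma> A l = {w. (\<forall>k. w k \<in> \<Sigma>) \<and> fval X A w > l}"

definition lang_eq1 :: "mode \<Rightarrow> nat set \<Rightarrow> qauto \<Rightarrow> (nat \<Rightarrow> nat) set" where
  "lang_eq1 X \<Sigma> A = {w. (\<forall>k. w k \<in> \<Sigma>) \<and> fval X A w = 1}"

definition QBA_gt :: "mode \<Rightarrow> nat set \<Rightarrow> real \<Rightarrow> (nat \<Rightarrow> nat) set set" where
  "QBA_gt X \<Sigma> l = {lang_gt X \<Sigma> A l | A. qauto_wf \<Sigma> A}"

definition QBA_eq1 :: "mode \<Rightarrow> nat set \<Rightarrow> (nat \<Rightarrow> nat) set set" where
  "QBA_eq1 X \<Sigma> = {lang_eq1 X \<Sigma> A | A. qauto_wf \<Sigma> A}"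

end

theory Submission
  imports Defs "HOL-Library.Infinite_Set"
begin

definition nrm2 :: "complex vec \<Rightarrow> real" where
  "nrm2 v = (\<Sum>i<dim_vec v. (cmod (v $ i))\<^sup>2)"

lemma braket_sum:
  assumes "dim_vec x = dim_vec y"
  shows "braket x y = (\<Sum>i<dim_vec y. cnj (x $ i) * y $ i)"
  unfolding braket_def scalar_prod_def using assms
  by (auto simp: atLeast0LessThan intro!: sum.cong)

lemma cnj_mult_self: "cnj z * z = complex_of_real ((cmod z)\<^sup>2)"
  by (simp only: cmod_power2) (simp add: complex_eq_iff power2_eq_square)

lemma braket_self: "braket x x = complex_of_real (nrm2 x)"
  by (simp add: braket_sum nrm2_def cnj_mult_self)

lemma unit_vec_nrm2: "unit_vec n v \<longleftrightarrow> v \<in> carrier_vec n \<and> nrm2 v = 1"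
  by (simp add: unit_vec_def braket_self)

lemma nrm2_nonneg: "nrm2 v \<ge> 0"
  unfolding nrm2_def by (auto intro!: sum_nonneg)

lemma CS_sum_real:
  fixes a b :: "nat \<Rightarrow> real"
  shows "(\<Sum>i\<in>I. a i * b i)\<^sup>2 \<le> (\<Sum>i\<in>I. (a i)\<^sup>2) * (\<Sum>i\<in>I. (b i)\<^sup>2)"
proof (cases "(\<Sum>i\<in>I. (b i)\<^sup>2) > 0")
  case False
  then consider "\<And>i. i\<in>I \<Longrightarrow> b i = 0" | "infinite I"
    by (metis (mono_tags, lifting) sum_pos2 zero_le_power2 zero_less_power2)
  thus ?thesis by fastforce
next
  case True
  define r where "r \<equiv> (\<Sum>i\<in>I. a i * b i) / (\<Sum>i\<in>I. (b i)\<^sup>2)"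
  have "0 \<le> (\<Sum>i\<in>I. (a i - r * b i)\<^sup>2)"
    by (simp add: sum_nonneg)
  also have "... = (\<Sum>i\<in>I. (a i)\<^sup>2) - 2 * r * (\<Sum>i\<in>I. a i * b i) + r\<^sup>2 * (\<Sum>i\<in>I. (b i)\<^sup>2)"
    by (simp add: algebra_simps power2_eq_square sum_distrib_left flip: sum.distrib)
  also have "\<dots> = (\<Sum>i\<in>I. (a i)\<^sup>2) - ((\<Sum>i\<in>I. a i * b i))\<^sup>2 / (\<Sum>i\<in>I. (b i)\<^sup>2)"
    by (simp add: r_def power2_eq_square)
  finally have "((\<Sum>i\<in>I. a i * b i))\<^sup>2 / (\<Sum>i\<in>I. (b i)\<^sup>2) \<le> (\<Sum>i\<in>I. (a i)\<^sup>2)"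
    by (simp add: le_diff_eq)
  thus ?thesis by (simp add: pos_divide_le_eq True)
qed

lemma CS_braket:
  assumes "dim_vec x = dim_vec y"
  shows "cmod (braket x y) \<le> sqrt (nrm2 x) * sqrt (nrm2 y)"
proof -
  let ?n = "dim_vec y"
  have "cmod (braket x y) \<le> (\<Sum>i<?n. cmod (cnj (x $ i) * y $ i))"
    unfolding braket_sum[OF assms] by (rule norm_sum)
  also have "\<dots> = (\<Sum>i<?n. cmod (x $ i) * cmod (y $ i))"
    by (simp add: norm_mult)
  also have "\<dots> \<le> sqrt (nrm2 x) * sqrt (nrm2 y)"
  proof -
    have "(\<Sum>i<?n. cmod (x $ i) * cmod (y $ i))\<^sup>2 \<le> (\<Sum>i<?n. (cmod (x $ i))\<^sup>2) * (\<Sum>i<?n. (cmod (y $ i))\<^sup>2)"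
      by (rule CS_sum_real)
    hence "(\<Sum>i<?n. cmod (x $ i) * cmod (y $ i))\<^sup>2 \<le> nrm2 x * nrm2 y"
      using assms by (simp add: nrm2_def)
    hence "sqrt ((\<Sum>i<?n. cmod (x $ i) * cmod (y $ i))\<^sup>2) \<le> sqrt (nrm2 x * nrm2 y)"
      using real_sqrt_le_mono by blast
    moreover have "(\<Sum>i<?n. cmod (x $ i) * cmod (y $ i)) \<ge> 0" by (auto intro!: sum_nonneg)
    ultimately show ?thesis by (simp add: real_sqrt_mult)
  qed
  finally show ?thesis .
qed

lemma cnj_mult_mat_vec:
  assumes "U \<in> carrier_mat n n" "x \<in> carrier_vec n"
  shows "map_vec cnj (U *\<^sub>v x) = map_mat cnj U *\<^sub>v map_vec cnj x"
  using assms by (intro eq_vecI) (auto simp: scalar_prod_def row_def cnj_sum)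

lemma unitary_braket:
  assumes U: "unitary_mat n U" and x: "x \<in> carrier_vec n" and y: "y \<in> carrier_vec n"
  shows "braket (U *\<^sub>v x) (U *\<^sub>v y) = braket x y"
proof -
  have Uc: "U \<in> carrier_mat n n" and A: "adj U * U = 1\<^sub>m n" using U unfolding unitary_mat_def by auto
  have adjc: "adj U \<in> carrier_mat n n" using Uc unfolding adj_def by auto
  have tr: "transpose_mat (adj U) = map_mat cnj U" unfolding adj_def by simp
  have "braket (U *\<^sub>v x) (U *\<^sub>v y) = (map_mat cnj U *\<^sub>v map_vec cnj x) \<bullet> (U *\<^sub>v y)"
    unfolding braket_def using cnj_mult_mat_vec[OF Uc x] by simp
  also have "\<dots> = (transpose_mat (adj U) *\<^sub>v map_vec cnj x) \<bullet> (U *\<^sub>v y)" by (simp add: tr)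
  also have "\<dots> = map_vec cnj x \<bullet> (adj U *\<^sub>v (U *\<^sub>v y))"
    by (rule transpose_vec_mult_scalar[OF adjc]) (use Uc y x in auto)
  also have "adj U *\<^sub>v (U *\<^sub>v y) = (adj U * U) *\<^sub>v y" using adjc Uc y by simp
  also have "\<dots> = y" using A y by simp
  finally show ?thesis unfolding braket_def .
qed

lemma unitary_nrm2:
  assumes U: "unitary_mat n U" and x: "x \<in> carrier_vec n"
  shows "nrm2 (U *\<^sub>v x) = nrm2 x"
  using unitary_braket[OF U x x] by (simp add: braket_self)

lemma unitary_carrier: "unitary_mat n U \<Longrightarrow> x \<in> carrier_vec n \<Longrightarrow> U *\<^sub>v x \<in> carrier_vec n"
  unfolding unitary_mat_def by auto

lemma nrm2_diff:
  assumes "dim_vec x = dim_vec y"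
  shows "nrm2 (y - x) = nrm2 y + nrm2 x - 2 * Re (braket x y)"
proof -
  have c: "(cmod (b - a))\<^sup>2 = (cmod b)\<^sup>2 + (cmod a)\<^sup>2 - 2 * Re (cnj a * b)" for a b :: complex
    by (simp only: cmod_power2) (simp add: power2_eq_square algebra_simps)
  show ?thesis using assms unfolding nrm2_def braket_sum[OF assms]
    by (simp add: c sum.distrib sum_subtractf Re_sum sum_distrib_left)
qed

lemma braket_minus:
  assumes "dim_vec x = dim_vec y" "dim_vec x = dim_vec z"
  shows "braket x (y - z) = braket x y - braket x z"
  using assms by (simp add: braket_sum algebra_simps sum_subtractf)

definition it :: "complex mat \<Rightarrow> nat \<Rightarrow> complex vec \<Rightarrow> complex vec" where
  "it U k x = ((\<lambda>v. U *\<^sub>v v) ^^ k) x"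

lemma it_0[simp]: "it U 0 x = x" and it_Suc: "it U (Suc k) x = U *\<^sub>v it U k x"
  by (simp_all add: it_def)

lemma it_add: "it U (a + b) x = it U a (it U b x)"
  by (simp add: it_def funpow_add)

lemma it_carrier: "unitary_mat n U \<Longrightarrow> x \<in> carrier_vec n \<Longrightarrow> it U k x \<in> carrier_vec n"
  by (induction k) (auto simp: it_Suc unitary_carrier)

lemma it_nrm2: "unitary_mat n U \<Longrightarrow> x \<in> carrier_vec n \<Longrightarrow> nrm2 (it U k x) = nrm2 x"
  by (induction k) (auto simp: it_Suc unitary_nrm2 it_carrier)

lemma it_minus:
  assumes U: "unitary_mat n U" and x: "x \<in> carrier_vec n" and y: "y \<in> carrier_vec n"
  shows "it U k (x - y) = it U k x - it U k y"
proof (induction k)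
  case (Suc k)
  have Uc: "U \<in> carrier_mat n n" using U unfolding unitary_mat_def by auto
  show ?case using Suc by (simp add: it_Suc mult_minus_distrib_mat_vec[OF Uc] it_carrier[OF U] x y)
qed simp

lemma comp_le_nrm2:
  assumes "i < dim_vec v"
  shows "(cmod (v $ i))\<^sup>2 \<le> nrm2 v"
  unfolding nrm2_def using assms by (intro member_le_sum) auto

lemma floor_eq_close:
  fixes u v :: real
  assumes "\<lfloor>u\<rfloor> = \<lfloor>v\<rfloor>"
  shows "\<bar>u - v\<bar> < 1"
proof -
  have "of_int \<lfloor>u\<rfloor> \<le> u" "u < of_int \<lfloor>u\<rfloor> + 1" "of_int \<lfloor>v\<rfloor> \<le> v" "v < of_int \<lfloor>v\<rfloor> + 1"
    by linarith+
  with assms show ?thesis by linarith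
qed

lemma floor_bound:
  fixes r :: real and N :: nat
  assumes "\<bar>r\<bar> \<le> 1"
  shows "\<lfloor>real N * r\<rfloor> \<in> {- int N..int N}"
proof -
  have "real N * r \<le> real N * 1" using assms by (intro mult_left_mono) auto
  moreover have "real N * (-1) \<le> real N * r" using assms by (intro mult_left_mono) auto
  ultimately have "real N * r \<le> real N" "- real N \<le> real N * r" by auto
  hence "\<lfloor>real N * r\<rfloor> \<le> int N" "- int N \<le> \<lfloor>real N * r\<rfloor>"
    by (simp_all add: floor_le_iff le_floor_iff)
  thus ?thesis by auto
qed

lemma recurrence:
  assumes U: "unitary_mat n U" and x: "x \<in> carrier_vec n" and x1: "nrm2 x = 1" and d: "\<delta> > 0"
  shows "\<exists>K. infinite K \<and> (\<forall>k\<in>K. 0 < k \<and> nrm2 (it U k x - x) < \<delta>)"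
proof -
  obtain N0 :: nat where N0: "2 * real n / \<delta> < real N0" using reals_Archimedean2 by blast
  define N where "N = max 1 N0"
  have N: "2 * real n / \<delta> < real N" "N \<ge> 1" using N0 by (auto simp: N_def max_def)
  define f where "f k = map (\<lambda>i. (\<lfloor>real N * Re (it U k x $ i)\<rfloor>, \<lfloor>real N * Im (it U k x $ i)\<rfloor>)) [0..<n]" for k
  define S where "S = {- int N..int N} \<times> {- int N..int N}"
  have compb: "\<bar>Re (it U k x $ i)\<bar> \<le> 1 \<and> \<bar>Im (it U k x $ i)\<bar> \<le> 1" if "i < n" for k i
  proof -
    have c: "it U k x \<in> carrier_vec n" by (rule it_carrier[OF U x])
    have "(cmod (it U k x $ i))\<^sup>2 \<le> 1"
      using comp_le_nrm2[of i "it U k x"] c that it_nrm2[OF U x, of k] x1 by auto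
    hence "cmod (it U k x $ i) \<le> 1" by (simp add: power_le_one_iff)
    thus ?thesis using abs_Re_le_cmod abs_Im_le_cmod order_trans by blast
  qed
  have "f ` UNIV \<subseteq> {xs. set xs \<subseteq> S \<and> length xs = n}"
    using compb floor_bound by (auto simp: f_def S_def)
  moreover have "finite {xs. set xs \<subseteq> S \<and> length xs = n}"
    by (rule finite_lists_length_eq) (simp add: S_def)
  ultimately have fin: "finite (f ` UNIV)" by (rule finite_subset)
  obtain k0 where k0: "infinite {k. f k = f k0}"
    using pigeonhole_infinite[OF infinite_UNIV_nat fin] by auto
  define S0 where "S0 = {k. f k = f k0} \<inter> {k0<..}"
  have "infinite S0"
  proof
    assume "finite S0"
    hence "finite (S0 \<union> {..k0})" by simp
    moreover have "{k. f k = f k0} \<subseteq> S0 \<union> {..k0}" by (auto simp: S0_def)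
    ultimately show False using k0 finite_subset by blast
  qed
  define K where "K = (\<lambda>k. k - k0) ` S0"
  have inj: "inj_on (\<lambda>k. k - k0) S0" by (auto simp: S0_def inj_on_def)
  have "infinite K" unfolding K_def using \<open>infinite S0\<close> finite_imageD[OF _ inj] by blast
  moreover have "0 < k - k0 \<and> nrm2 (it U (k - k0) x - x) < \<delta>" if k: "k \<in> S0" for k
  proof -
    have kk: "k0 < k" "f k = f k0" using k by (auto simp: S0_def)
    define dd where "dd = k - k0"
    have kdd: "k = k0 + dd" using kk by (simp add: dd_def)
    have c1: "it U dd x \<in> carrier_vec n" by (rule it_carrier[OF U x])
    have "nrm2 (it U dd x - x) = nrm2 (it U k0 (it U dd x - x))"
      using it_nrm2[OF U, of "it U dd x - x" k0] c1 x by simp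
    also have "\<dots> = nrm2 (it U k x - it U k0 x)"
      by (simp add: it_minus[OF U c1 x] kdd it_add)
    also have "\<dots> \<le> real n * (2 / (real N)\<^sup>2)"
    proof -
      have ca: "it U k x \<in> carrier_vec n" "it U k0 x \<in> carrier_vec n" by (rule it_carrier[OF U x])+
      have dimd: "dim_vec (it U k x - it U k0 x) = n" using ca by simp
      have comp: "(cmod ((it U k x - it U k0 x) $ i))\<^sup>2 \<le> 2 / (real N)\<^sup>2" if i: "i < n" for i
      proof -
        let ?a = "it U k x $ i" and ?b = "it U k0 x $ i"
        have fe: "f k ! i = f k0 ! i" using kk by simp
        hence e1: "\<lfloor>real N * Re ?a\<rfloor> = \<lfloor>real N * Re ?b\<rfloor>" and e2: "\<lfloor>real N * Im ?a\<rfloor> = \<lfloor>real N * Im ?b\<rfloor>"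
          using i by (simp_all add: f_def)
        have Np: "real N > 0" using N by simp
        have "\<bar>real N * (Re ?a - Re ?b)\<bar> < 1" using floor_eq_close[OF e1] by (simp add: algebra_simps)
        hence r1: "\<bar>Re ?a - Re ?b\<bar> * real N < 1" by (simp add: abs_mult mult.commute)
        have "\<bar>real N * (Im ?a - Im ?b)\<bar> < 1" using floor_eq_close[OF e2] by (simp add: algebra_simps)
        hence r2: "\<bar>Im ?a - Im ?b\<bar> * real N < 1" by (simp add: abs_mult mult.commute)
        have q1: "(Re ?a - Re ?b)\<^sup>2 * (real N)\<^sup>2 \<le> 1"
        proof -
          have "(\<bar>Re ?a - Re ?b\<bar> * real N)\<^sup>2 \<le> 1" using r1 by (simp add: abs_square_le_1 less_imp_le)
          thus ?thesis by (simp add: power_mult_distrib)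
        qed
        have q2: "(Im ?a - Im ?b)\<^sup>2 * (real N)\<^sup>2 \<le> 1"
        proof -
          have "(\<bar>Im ?a - Im ?b\<bar> * real N)\<^sup>2 \<le> 1" using r2 by (simp add: abs_square_le_1 less_imp_le)
          thus ?thesis by (simp add: power_mult_distrib)
        qed
        have "(cmod ((it U k x - it U k0 x) $ i))\<^sup>2 = (Re ?a - Re ?b)\<^sup>2 + (Im ?a - Im ?b)\<^sup>2"
          using ca i by (simp add: cmod_power2)
        also have "\<dots> \<le> 2 / (real N)\<^sup>2" using q1 q2 Np by (simp add: field_simps)
        finally show ?thesis .
      qed
      have "nrm2 (it U k x - it U k0 x) \<le> real (card {..<n}) * (2 / (real N)\<^sup>2)"
        unfolding nrm2_def dimd by (intro sum_bounded_above) (use comp in auto)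
      thus ?thesis by simp
    qed
    also have "\<dots> < \<delta>"
    proof -
      have "real N \<le> (real N)\<^sup>2" using N by (simp add: power2_eq_square)
      hence "real n * (2 / (real N)\<^sup>2) \<le> real n * (2 / real N)" using N
        by (intro mult_left_mono divide_left_mono) auto
      also have "\<dots> < \<delta>" using N d by (simp add: field_simps)
      finally show ?thesis .
    qed
    finally show ?thesis using kk by (simp add: dd_def)
  qed
  ultimately show ?thesis unfolding K_def by blast
qed

lemma recurrence_re:
  assumes U: "unitary_mat n U" and x: "x \<in> carrier_vec n" and x1: "nrm2 x = 1" and e: "\<eta> > 0"
  shows "\<exists>K. infinite K \<and> (\<forall>k\<in>K. 0 < k \<and> Re (braket x (it U k x)) > 1 - \<eta>)"
proof -
  obtain K where K: "infinite K" "\<forall>k\<in>K. 0 < k \<and> nrm2 (it U k x - x) < 2 * \<eta>"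
    using recurrence[OF U x x1, of "2 * \<eta>"] e by auto
  have "Re (braket x (it U k x)) > 1 - \<eta>" if "k \<in> K" for k
  proof -
    have c: "it U k x \<in> carrier_vec n" by (rule it_carrier[OF U x])
    have "nrm2 (it U k x - x) = nrm2 (it U k x) + nrm2 x - 2 * Re (braket x (it U k x))"
      by (rule nrm2_diff) (use c x in auto)
    thus ?thesis using K that it_nrm2[OF U x, of k] x1 by auto
  qed
  thus ?thesis using K by blast
qed

lemma dirichlet:
  fixes a :: real and N :: nat
  assumes N: "N > 0"
  shows "\<exists>q p. 0 < q \<and> q \<le> N \<and> \<bar>real q * a - real_of_int p\<bar> < 1 / real N"
proof -
  define g where "g k = nat \<lfloor>frac (real k * a) * real N\<rfloor>" for k :: nat
  have gr: "g ` {0..N} \<subseteq> {0..<N}"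
  proof
    fix y assume "y \<in> g ` {0..N}"
    then obtain k where y: "y = g k" by auto
    have "frac (real k * a) < 1" "0 \<le> frac (real k * a)" by (simp_all add: frac_lt_1)
    hence "frac (real k * a) * real N < real N" using N by simp
    hence "\<lfloor>frac (real k * a) * real N\<rfloor> < int N" by (simp add: floor_less_iff)
    moreover have "0 \<le> \<lfloor>frac (real k * a) * real N\<rfloor>" by (simp add: frac_ge_0)
    ultimately show "y \<in> {0..<N}" using y g_def by (simp add: nat_less_iff)
  qed
  have "card (g ` {0..N}) \<le> card {0..<N}" using gr by (intro card_mono) auto
  hence "card (g ` {0..N}) < card {0..N}" by simp
  hence "\<not> inj_on g {0..N}" using pigeonhole by blast
  then obtain i j where ij: "i \<in> {0..N}" "j \<in> {0..N}" "i \<noteq> j" "g i = g j"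
    unfolding inj_on_def by blast
  have main: "\<exists>q p. 0 < q \<and> q \<le> N \<and> \<bar>real q * a - real_of_int p\<bar> < 1 / real N"
    if "i < j" "i \<le> N" "j \<le> N" "g i = g j" for i j
  proof -
    have fi: "0 \<le> frac (real i * a) * real N" "0 \<le> frac (real j * a) * real N"
      by (simp_all add: frac_ge_0)
    have "\<lfloor>frac (real i * a) * real N\<rfloor> = \<lfloor>frac (real j * a) * real N\<rfloor>"
      using that(4) fi unfolding g_def by (simp add: nat_eq_iff2)
    hence "\<bar>frac (real j * a) * real N - frac (real i * a) * real N\<bar> < 1"
      using floor_eq_close by (metis abs_minus_commute)
    hence "\<bar>frac (real j * a) - frac (real i * a)\<bar> * real N < 1"
      by (metis abs_of_nat abs_mult left_diff_distrib)
    hence lt: "\<bar>frac (real j * a) - frac (real i * a)\<bar> < 1 / real N"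
      using N by (simp add: field_simps)
    have "real (j - i) * a - real_of_int (\<lfloor>real j * a\<rfloor> - \<lfloor>real i * a\<rfloor>) = frac (real j * a) - frac (real i * a)"
      using that(1) by (simp add: frac_def of_nat_diff algebra_simps)
    thus ?thesis using lt that by (intro exI[of _ "j - i"] exI[of _ "\<lfloor>real j * a\<rfloor> - \<lfloor>real i * a\<rfloor>"]) auto
  qed
  show ?thesis
  proof (cases "i < j")
    case True thus ?thesis using main ij by auto
  next
    case False hence "j < i" using ij by auto
    thus ?thesis using main ij by auto
  qed
qed

lemma wf_unitary: "qauto_wf \<Sigma> A \<Longrightarrow> \<sigma> \<in> \<Sigma> \<Longrightarrow> unitary_mat (qdim A) (qtrans A \<sigma>)"
  unfolding qauto_wf_def by auto

lemma nd_run_unit: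
  assumes wf: "qauto_wf \<Sigma> A" and w: "\<forall>k. w k \<in> \<Sigma>"
  shows "nd_run A w k \<in> carrier_vec (qdim A) \<and> nrm2 (nd_run A w k) = 1"
proof (induction k)
  case 0 thus ?case using wf by (simp add: qauto_wf_def unit_vec_nrm2)
next
  case (Suc k)
  have U: "unitary_mat (qdim A) (qtrans A (w k))" using wf_unitary[OF wf] w by auto
  thus ?case using Suc by (simp add: unitary_carrier unitary_nrm2)
qed

lemma d_run_unit:
  assumes wf: "qauto_wf \<Sigma> A" and w: "\<forall>k. w k \<in> \<Sigma>" and psi: "unit_vec (qdim A) \<psi>"
  shows "d_run A w \<psi> ns k \<in> carrier_vec (qdim A) \<and> nrm2 (d_run A w \<psi> ns k) = 1"
proof (induction k)
  case 0 thus ?case using wf by (simp add: qauto_wf_def unit_vec_nrm2)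
next
  case (Suc k)
  have U: "unitary_mat (qdim A) (qtrans A (w k))" using wf_unitary[OF wf] w by auto
  show ?case using Suc psi U by (simp add: unitary_carrier unitary_nrm2 unit_vec_nrm2)
qed

lemma run_unit:
  assumes wf: "qauto_wf \<Sigma> A" and w: "\<forall>k. w k \<in> \<Sigma>" and psi: "unit_vec (qdim A) \<psi>"
  shows "run X A w \<psi> ns k \<in> carrier_vec (qdim A) \<and> nrm2 (run X A w \<psi> ns k) = 1"
  using nd_run_unit[OF wf w] d_run_unit[OF wf w psi] by (cases X) (auto simp: run_def)

lemma term_le1:
  assumes "unit_vec n \<psi>" "s \<in> carrier_vec n" "nrm2 s = 1"
  shows "(cmod (braket \<psi> s))\<^sup>2 \<le> 1"
proof -
  have "cmod (braket \<psi> s) \<le> sqrt (nrm2 \<psi>) * sqrt (nrm2 s)"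
    by (rule CS_braket) (use assms in \<open>auto simp: unit_vec_nrm2\<close>)
  hence "cmod (braket \<psi> s) \<le> 1" using assms by (simp add: unit_vec_nrm2)
  thus ?thesis by (simp add: power_le_one)
qed

definition fset :: "mode \<Rightarrow> qauto \<Rightarrow> (nat \<Rightarrow> nat) \<Rightarrow> real set" where
  "fset X A w = {Inf (range (\<lambda>i. (cmod (braket \<psi> (run X A w \<psi> ns (ns i))))\<^sup>2)) | \<psi> ns.
        \<psi> \<in> qacc A \<and> unit_vec (qdim A) \<psi> \<and> strict_mono ns}"

lemma fval_fset: "fval X A w = Sup (insert 0 (fset X A w))"
  unfolding fval_def fset_def ..

lemma Inf_le_term:
  fixes f :: "nat \<Rightarrow> real"
  assumes "\<forall>i. f i \<ge> 0"
  shows "Inf (range f) \<le> f i"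
  by (rule cINF_lower) (use assms in \<open>auto intro!: bdd_belowI[of _ 0]\<close>)

lemma Inf_ge:
  fixes f :: "nat \<Rightarrow> real"
  assumes "\<forall>i. f i \<ge> c"
  shows "Inf (range f) \<ge> c"
  by (rule cINF_greatest) (use assms in auto)

lemma fset_le1:
  assumes wf: "qauto_wf \<Sigma> A" and w: "\<forall>k. w k \<in> \<Sigma>" and x: "x \<in> fset X A w"
  shows "x \<le> 1"
proof -
  obtain \<psi> ns where x: "x = Inf (range (\<lambda>i. (cmod (braket \<psi> (run X A w \<psi> ns (ns i))))\<^sup>2))"
    and psi: "unit_vec (qdim A) \<psi>" using x unfolding fset_def by auto
  have "x \<le> (cmod (braket \<psi> (run X A w \<psi> ns (ns 0))))\<^sup>2" unfolding x by (rule Inf_le_term) auto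
  also have "\<dots> \<le> 1" using term_le1[OF psi] run_unit[OF wf w psi] by auto
  finally show ?thesis .
qed

lemma fval_ge:
  assumes wf: "qauto_wf \<Sigma> A" and w: "\<forall>k. w k \<in> \<Sigma>"
    and psi: "\<psi> \<in> qacc A" "unit_vec (qdim A) \<psi>" and ns: "strict_mono ns"
  shows "Inf (range (\<lambda>i. (cmod (braket \<psi> (run X A w \<psi> ns (ns i))))\<^sup>2)) \<le> fval X A w"
  unfolding fval_fset
proof (rule cSup_upper)
  show "Inf (range (\<lambda>i. (cmod (braket \<psi> (run X A w \<psi> ns (ns i))))\<^sup>2)) \<in> insert 0 (fset X A w)"
    using psi ns unfolding fset_def by blast
  show "bdd_above (insert 0 (fset X A w))"
    using fset_le1[OF wf w] by (intro bdd_aboveI[of _ 1]) auto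
qed

lemma fval_witness:
  assumes "fval X A w > m" "m \<ge> 0"
  shows "\<exists>\<psi> ns. \<psi> \<in> qacc A \<and> unit_vec (qdim A) \<psi> \<and> strict_mono ns \<and>
           Inf (range (\<lambda>i. (cmod (braket \<psi> (run X A w \<psi> ns (ns i))))\<^sup>2)) > m"
proof (rule ccontr)
  assume "\<not> ?thesis"
  hence "\<forall>x \<in> insert 0 (fset X A w). x \<le> m" using assms(2) unfolding fset_def by (auto simp: not_less)
  hence "fval X A w \<le> m" unfolding fval_fset by (intro cSup_least) auto
  thus False using assms by simp
qed

lemma fval_le:
  assumes "\<And>\<psi> ns. \<psi> \<in> qacc A \<Longrightarrow> unit_vec (qdim A) \<psi> \<Longrightarrow> strict_mono ns \<Longrightarrow>
           Inf (range (\<lambda>i. (cmod (braket \<psi> (run X A w \<psi> ns (ns i))))\<^sup>2)) \<le> M"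
    and "M \<ge> 0"
  shows "fval X A w \<le> M"
  unfolding fval_fset using assms by (intro cSup_least) (auto simp: fset_def)

primrec segr :: "qauto \<Rightarrow> (nat \<Rightarrow> nat) \<Rightarrow> nat \<Rightarrow> nat \<Rightarrow> complex vec \<Rightarrow> complex vec" where
  "segr A w j 0 v = v"
| "segr A w j (Suc t) v = qtrans A (w (j + t)) *\<^sub>v segr A w j t v"

lemma nd_run_segr: "nd_run A w k = segr A w 0 k (qinit A)"
  by (induction k) auto

lemma nd_run_add: "nd_run A w (j + t) = segr A w j t (nd_run A w j)"
  by (induction t) auto

lemma segr_cong: "(\<forall>r<t. w' (j' + r) = w (j + r)) \<Longrightarrow> segr A w' j' t v = segr A w j t v"
  by (induction t) auto

lemma segr_const: "(\<forall>r<t. w (j + r) = \<sigma>) \<Longrightarrow> segr A w j t v = it (qtrans A \<sigma>) t v"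
  by (induction t) (auto simp: it_Suc)

lemma d_run_seg:
  assumes "j \<in> range ns" "\<forall>r. j < r \<and> r \<le> j + t \<longrightarrow> r \<notin> range ns"
  shows "d_run A w \<psi> ns (Suc (j + t)) = segr A w j (Suc t) \<psi>"
  using assms
proof (induction t)
  case 0 thus ?case by simp
next
  case (Suc t)
  have "j + Suc t \<notin> range ns" using Suc.prems by auto
  hence "d_run A w \<psi> ns (Suc (j + Suc t)) = qtrans A (w (j + Suc t)) *\<^sub>v d_run A w \<psi> ns (Suc (j + t))"
    by simp
  also have "d_run A w \<psi> ns (Suc (j + t)) = segr A w j (Suc t) \<psi>" using Suc by auto
  finally show ?case by simp
qed

lemma d_run_pre: "(\<forall>r<k. r \<notin> range ns) \<Longrightarrow> d_run A w \<psi> ns k = segr A w 0 k (qinit A)"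
  by (induction k) auto

lemma d_run_ns_Suc:
  assumes ns: "strict_mono ns"
  shows "d_run A w \<psi> ns (ns (Suc i)) = segr A w (ns i) (ns (Suc i) - ns i) \<psi>"
proof -
  have lt: "ns i < ns (Suc i)" using ns by (simp add: strict_mono_Suc_iff)
  define t where "t = ns (Suc i) - ns i - 1"
  have e: "ns (Suc i) = Suc (ns i + t)" using lt by (simp add: t_def)
  have nr: "\<forall>r. ns i < r \<and> r \<le> ns i + t \<longrightarrow> r \<notin> range ns"
  proof (intro allI impI)
    fix r assume r: "ns i < r \<and> r \<le> ns i + t"
    show "r \<notin> range ns"
    proof
      assume "r \<in> range ns" then obtain q where q: "r = ns q" by auto
      show False
      proof (cases "q \<le> i")
        case True hence "ns q \<le> ns i" using ns strict_mono_less_eq by blast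
        thus False using r q by simp
      next
        case False hence "Suc i \<le> q" by simp
        hence "ns (Suc i) \<le> ns q" using ns strict_mono_less_eq by blast
        thus False using r q e by simp
      qed
    qed
  qed
  have "d_run A w \<psi> ns (ns (Suc i)) = segr A w (ns i) (Suc t) \<psi>"
    unfolding e by (rule d_run_seg) (use nr in auto)
  thus ?thesis using e by simp
qed

lemma d_run_ns0:
  assumes ns: "strict_mono ns"
  shows "d_run A w \<psi> ns (ns 0) = segr A w 0 (ns 0) (qinit A)"
proof (rule d_run_pre, intro allI impI)
  fix r assume r: "r < ns 0"
  show "r \<notin> range ns"
  proof
    assume "r \<in> range ns" then obtain q where "r = ns q" by auto
    moreover have "ns 0 \<le> ns q" using ns strict_mono_less_eq by blast
    ultimately show False using r by simp
  qed
qed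

section \<open>Trigonometry of the Pythagorean angle\<close>

definition th :: real where "th = arccos (3/5)"

lemma cos_th: "cos th = 3/5" by (simp add: th_def)

lemma sin_th: "sin th = 4/5"
proof -
  have "sin th = sqrt (1 - (3/5)\<^sup>2)" by (simp add: th_def sin_arccos)
  also have "1 - (3/5::real)\<^sup>2 = (4/5)\<^sup>2" by (simp add: power2_eq_square)
  finally show ?thesis by simp
qed

primrec pyth :: "nat \<Rightarrow> int \<times> int" where
  "pyth 0 = (1, 0)"
| "pyth (Suc j) = (3 * fst (pyth j) - 4 * snd (pyth j), 4 * fst (pyth j) + 3 * snd (pyth j))"

lemma pyth_trig: "cos (real j * th) = real_of_int (fst (pyth j)) / 5 ^ j \<and> sin (real j * th) = real_of_int (snd (pyth j)) / 5 ^ j"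
proof (induction j)
  case 0 thus ?case by simp
next
  case (Suc j)
  have e: "real (Suc j) * th = real j * th + th" by (simp add: algebra_simps)
  show ?case unfolding e cos_add sin_add using Suc by (simp add: cos_th sin_th field_simps)
qed

lemma pyth_mod: "j \<ge> 1 \<Longrightarrow> fst (pyth j) mod 5 = 3 \<and> snd (pyth j) mod 5 = 4"
proof (induction j)
  case 0 thus ?case by simp
next
  case (Suc j)
  show ?case
  proof (cases "j = 0")
    case True thus ?thesis by simp
  next
    case False
    hence IH: "fst (pyth j) mod 5 = 3" "snd (pyth j) mod 5 = 4" using Suc by auto
    define x where "x = fst (pyth j)"
    define y where "y = snd (pyth j)"
    have x: "x = x div 5 * 5 + 3" using IH(1) div_mult_mod_eq[of x 5] by (simp add: x_def)
    have y: "y = y div 5 * 5 + 4" using IH(2) div_mult_mod_eq[of y 5] by (simp add: y_def)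
    obtain a where a: "x = a * 5 + 3" using x by blast
    obtain b where b: "y = b * 5 + 4" using y by blast
    have e1: "3 * x - 4 * y = 5 * (3 * a - 4 * b - 2) + 3" unfolding a b by (simp add: algebra_simps)
    have e2: "4 * x + 3 * y = 5 * (4 * a + 3 * b + 4) + 4" unfolding a b by (simp add: algebra_simps)
    have m3: "(5 * k + 3) mod 5 = 3" for k :: int by simp
    have m4: "(5 * k + 4) mod 5 = 4" for k :: int by simp
    have "(3 * x - 4 * y) mod 5 = 3" by (subst e1) (rule m3)
    moreover have "(4 * x + 3 * y) mod 5 = 4" by (subst e2) (rule m4)
    ultimately show ?thesis by (simp add: x_def y_def)
  qed
qed

lemma sin_ne0: "j \<ge> 1 \<Longrightarrow> sin (real j * th) \<noteq> 0"
proof -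
  assume j: "j \<ge> 1"
  have "snd (pyth j) \<noteq> 0" using pyth_mod[OF j] by auto
  thus ?thesis using pyth_trig[of j] by simp
qed

lemma cos2_lt1: "j \<ge> 1 \<Longrightarrow> (cos (real j * th))\<^sup>2 < 1"
proof -
  assume j: "j \<ge> 1"
  have "(sin (real j * th))\<^sup>2 > 0" using sin_ne0[OF j] by simp
  thus ?thesis using sin_cos_squared_add[of "real j * th"] by linarith
qed

lemma cos2_shift: "(cos (x + real_of_int m * pi))\<^sup>2 = (cos x)\<^sup>2"
proof -
  have s: "sin (real_of_int m * pi) = 0" using sin_zero_iff_int2 by blast
  hence c: "(cos (real_of_int m * pi))\<^sup>2 = 1" using sin_cos_squared_add[of "real_of_int m * pi"] by simp
  show ?thesis unfolding cos_add s using c by (simp add: power_mult_distrib)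
qed

lemma dirichlet_pi:
  assumes N: "N > 0"
  shows "\<exists>q p. 0 < q \<and> \<bar>real q * a - real_of_int p * pi\<bar> < pi / real N"
proof -
  obtain q p where qp: "0 < q" "\<bar>real q * (a / pi) - real_of_int p\<bar> < 1 / real N"
    using dirichlet[OF N, of "a / pi"] by auto
  have "\<bar>real q * a - real_of_int p * pi\<bar> = \<bar>real q * (a / pi) - real_of_int p\<bar> * pi"
    by (simp add: abs_mult_pos[symmetric] field_simps)
  also have "\<dots> < 1 / real N * pi" using qp pi_gt_zero by (intro mult_strict_right_mono) auto
  finally show ?thesis using qp by auto
qed

lemma approx_one:
  assumes e: "\<epsilon> > 0"
  shows "\<exists>d\<ge>1. (cos (real d * th))\<^sup>2 \<ge> 1 - \<epsilon>"
proof -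
  obtain N :: nat where N: "pi / sqrt \<epsilon> < real N" using reals_Archimedean2 by blast
  have "pi / sqrt \<epsilon> > 0" using e by simp
  hence "real N > 0" using N by linarith
  hence Np: "N > 0" by simp
  obtain q p where qp: "0 < q" "\<bar>real q * th - real_of_int p * pi\<bar> < pi / real N"
    using dirichlet_pi[OF Np, of th] by auto
  define y where "y = real q * th - real_of_int p * pi"
  have "pi / real N < sqrt \<epsilon>" using N e Np by (simp add: field_simps)
  hence ys: "\<bar>y\<bar> < sqrt \<epsilon>" using qp y_def by linarith
  have "\<bar>y\<bar>\<^sup>2 < (sqrt \<epsilon>)\<^sup>2" using ys by (intro power_strict_mono) auto
  hence "y\<^sup>2 < \<epsilon>" using e by simp
  have "\<bar>sin y\<bar>\<^sup>2 \<le> \<bar>y\<bar>\<^sup>2" using abs_sin_x_le_abs_x[of y] by (intro power_mono) auto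
  hence "(sin y)\<^sup>2 \<le> y\<^sup>2" by simp
  have "(cos (real q * th))\<^sup>2 = (cos y)\<^sup>2" using cos2_shift[of y p] by (simp add: y_def)
  also have "\<dots> = 1 - (sin y)\<^sup>2" using sin_cos_squared_add[of y] by linarith
  finally have "(cos (real q * th))\<^sup>2 \<ge> 1 - \<epsilon>"
    using \<open>(sin y)\<^sup>2 \<le> y\<^sup>2\<close> \<open>y\<^sup>2 < \<epsilon>\<close> by linarith
  thus ?thesis using qp by (intro exI[of _ q]) auto
qed

lemma density:
  assumes d: "d \<ge> 1" and l: "l > 0"
  shows "\<exists>t. (cos (real (t * d) * th))\<^sup>2 \<le> l"
proof -
  define \<alpha> where "\<alpha> = real d * th"
  obtain N :: nat where N: "pi / sqrt l + 2 < real N" using reals_Archimedean2 by blast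
  have sl: "sqrt l > 0" using l by simp
  have "pi / sqrt l > 0" using sl by simp
  hence N2: "real N > 2" using N by linarith
  hence Np: "N > 0" by simp
  obtain q p where qp: "0 < q" "\<bar>real q * \<alpha> - real_of_int p * pi\<bar> < pi / real N"
    using dirichlet_pi[OF Np, of \<alpha>] by auto
  define \<beta> where "\<beta> = real q * \<alpha> - real_of_int p * pi"
  have bne: "\<beta> \<noteq> 0"
  proof
    assume "\<beta> = 0"
    hence "real q * \<alpha> = real_of_int p * pi" by (simp add: \<beta>_def)
    moreover have "real (q * d) * th = real q * \<alpha>" by (simp add: \<alpha>_def)
    ultimately have "real (q * d) * th = real_of_int p * pi" by simp
    hence "sin (real (q * d) * th) = 0" using sin_zero_iff_int2 by blast
    moreover have "q * d \<ge> 1" using qp d by simp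
    ultimately show False using sin_ne0 by blast
  qed
  define b where "b = \<bar>\<beta>\<bar>"
  have bpos: "b > 0" using bne b_def by simp
  have bsmall: "b < pi / real N" using qp b_def \<beta>_def by simp
  have "pi / real N < pi / 2" using N2 pi_gt_zero by (intro divide_strict_left_mono) auto
  hence bhalf: "b < pi / 2" using bsmall by linarith
  have "pi / real N < sqrt l"
  proof -
    have "pi / sqrt l < real N" using N by linarith
    thus ?thesis using sl Np by (simp add: field_simps)
  qed
  hence bl: "b < sqrt l" using bsmall by linarith
  define s where "s = nat \<lfloor>(pi / 2) / b\<rfloor>"
  have fl0: "0 \<le> \<lfloor>(pi / 2) / b\<rfloor>" using bpos pi_gt_zero by simp
  have rs: "real s = real_of_int \<lfloor>(pi / 2) / b\<rfloor>" using fl0 by (simp add: s_def)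
  have fc: "real_of_int \<lfloor>(pi / 2) / b\<rfloor> \<le> (pi / 2) / b \<and> (pi / 2) / b < real_of_int (\<lfloor>(pi / 2) / b\<rfloor> + 1)"
    by (rule floor_correct)
  have s1: "real s \<le> (pi / 2) / b" using fc rs by simp
  have s2: "(pi / 2) / b < real s + 1" using fc rs by simp
  have sb1: "real s * b \<le> pi / 2" using s1 bpos by (simp add: field_simps)
  have sb2: "pi / 2 < real s * b + b" using s2 bpos by (simp add: field_simps)
  define z where "z = pi / 2 - real s * b"
  have z: "0 \<le> z" "z < b" using sb1 sb2 by (auto simp: z_def)
  have "cos (real s * b) = sin z" unfolding z_def by (simp add: cos_sin_eq)
  moreover have "0 \<le> sin z" using z bhalf by (intro sin_ge_zero) auto
  moreover have "sin z \<le> z" using abs_sin_x_le_abs_x[of z] z by simp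
  ultimately have cb: "\<bar>cos (real s * b)\<bar> < sqrt l" using z bl by simp
  have "(cos (real s * \<beta>))\<^sup>2 = (cos (real s * b))\<^sup>2"
    by (cases "\<beta> \<ge> 0") (simp_all add: b_def)
  also have "\<dots> \<le> l"
  proof -
    have "(cos (real s * b))\<^sup>2 = \<bar>cos (real s * b)\<bar>\<^sup>2" by simp
    also have "\<dots> \<le> (sqrt l)\<^sup>2" using cb by (intro power_mono) auto
    finally show ?thesis using l by simp
  qed
  finally have c1: "(cos (real s * \<beta>))\<^sup>2 \<le> l" .
  have e: "real (s * q * d) * th = real s * \<beta> + real_of_int (int s * p) * pi"
    by (simp add: \<beta>_def \<alpha>_def algebra_simps)
  have eq2: "(cos (real (s * q * d) * th))\<^sup>2 = (cos (real s * \<beta>))\<^sup>2" unfolding e by (rule cos2_shift)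
  have "(cos (real (s * q * d) * th))\<^sup>2 \<le> l" using c1 eq2 by linarith
  thus ?thesis by (rule exI[of _ "s * q"])
qed

section \<open>The rotation automaton\<close>

definition rv :: "real \<Rightarrow> complex vec" where
  "rv \<phi> = vec 2 (\<lambda>i. if i = 0 then complex_of_real (cos \<phi>) else complex_of_real (sin \<phi>))"

definition Rm :: "complex mat" where
  "Rm = mat 2 2 (\<lambda>(i, j). if i = 0 then (if j = 0 then 3/5 else - 4/5) else (if j = 0 then 4/5 else 3/5))"

definition Arot :: qauto where
  "Arot = \<lparr>qdim = 2, qinit = rv 0, qtrans = (\<lambda>\<sigma>. if \<sigma> = 1 then Rm else 1\<^sub>m 2),
           qacc = {v \<in> carrier_vec 2. v $ 1 = 0}\<rparr>"

lemma rv_carrier[simp]: "rv \<phi> \<in> carrier_vec 2" by (simp add: rv_def)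

lemma Rm_carrier[simp]: "Rm \<in> carrier_mat 2 2" by (simp add: Rm_def)

lemma sum2: "(\<Sum>i\<in>{0..<2::nat}. f i) = f 0 + f 1"
  by (simp add: numeral_2_eq_2)

lemma Rm_rv: "Rm *\<^sub>v rv \<phi> = rv (\<phi> + th)"
proof (rule eq_vecI)
  show "dim_vec (Rm *\<^sub>v rv \<phi>) = dim_vec (rv (\<phi> + th))" by (simp add: Rm_def rv_def)
  fix i assume "i < dim_vec (rv (\<phi> + th))"
  hence i: "i < 2" by (simp add: rv_def)
  have "i = 0 \<or> i = 1" using i by auto
  thus "(Rm *\<^sub>v rv \<phi>) $ i = rv (\<phi> + th) $ i"
    using i by (auto simp: Rm_def rv_def mult_mat_vec_def scalar_prod_def row_def sum2 cos_add sin_add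
        cos_th sin_th algebra_simps)
qed

lemma Rm_smult: "Rm *\<^sub>v (c \<cdot>\<^sub>v rv \<phi>) = c \<cdot>\<^sub>v rv (\<phi> + th)"
  by (simp add: mult_mat_vec[OF Rm_carrier rv_carrier] Rm_rv)

lemma adj_Rm: "adj Rm = mat 2 2 (\<lambda>(i, j). if i = 0 then (if j = 0 then 3/5 else 4/5) else (if j = 0 then - 4/5 else 3/5))"
  by (rule eq_matI) (auto simp: adj_def Rm_def)

lemma unitary_Rm: "unitary_mat 2 Rm"
  unfolding unitary_mat_def
proof (intro conjI)
  show "Rm \<in> carrier_mat 2 2" by simp
  show "Rm * adj Rm = 1\<^sub>m 2"
  proof (rule eq_matI)
    fix i j assume ij: "i < dim_row (1\<^sub>m 2 :: complex mat)" "j < dim_col (1\<^sub>m 2 :: complex mat)"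
    hence "i = 0 \<or> i = 1" "j = 0 \<or> j = 1" by auto
    thus "(Rm * adj Rm) $$ (i, j) = 1\<^sub>m 2 $$ (i, j)"
      unfolding adj_Rm using ij by (auto simp: Rm_def scalar_prod_def row_def col_def sum2)
  qed (unfold adj_Rm, auto simp: Rm_def)
  show "adj Rm * Rm = 1\<^sub>m 2"
  proof (rule eq_matI)
    fix i j assume ij: "i < dim_row (1\<^sub>m 2 :: complex mat)" "j < dim_col (1\<^sub>m 2 :: complex mat)"
    hence "i = 0 \<or> i = 1" "j = 0 \<or> j = 1" by auto
    thus "(adj Rm * Rm) $$ (i, j) = 1\<^sub>m 2 $$ (i, j)"
      unfolding adj_Rm using ij by (auto simp: Rm_def scalar_prod_def row_def col_def sum2)
  qed (unfold adj_Rm, auto simp: Rm_def)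
qed

lemma unitary_one: "unitary_mat n (1\<^sub>m n)"
proof -
  have "adj (1\<^sub>m n) = (1\<^sub>m n :: complex mat)" by (rule eq_matI) (auto simp: adj_def)
  thus ?thesis unfolding unitary_mat_def by simp
qed

lemma wf_Arot: "qauto_wf {0, 1} Arot"
  unfolding qauto_wf_def
proof (intro conjI)
  show "unit_vec (qdim Arot) (qinit Arot)"
    by (simp add: Arot_def unit_vec_def braket_sum rv_def sum2 lessThan_atLeast0)
  show "\<forall>\<sigma>\<in>{0, 1}. unitary_mat (qdim Arot) (qtrans Arot \<sigma>)"
    by (auto simp: Arot_def unitary_Rm unitary_one)
  show "is_subspace (qdim Arot) (qacc Arot)"
    by (auto simp: Arot_def is_subspace_def)
qed

definition cnt :: "(nat \<Rightarrow> nat) \<Rightarrow> nat \<Rightarrow> nat \<Rightarrow> nat" where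
  "cnt w j t = card {r. r < t \<and> w (j + r) = 1}"

lemma cnt_0[simp]: "cnt w j 0 = 0" by (simp add: cnt_def)

lemma cnt_Suc: "cnt w j (Suc t) = cnt w j t + (if w (j + t) = 1 then 1 else 0)"
proof -
  have "{r. r < Suc t \<and> w (j + r) = 1} = {r. r < t \<and> w (j + r) = 1} \<union> (if w (j + t) = 1 then {t} else {})"
    by (auto simp: less_Suc_eq)
  moreover have "finite {r. r < t \<and> w (j + r) = 1}" by simp
  moreover have "t \<notin> {r. r < t \<and> w (j + r) = 1}" by simp
  ultimately show ?thesis unfolding cnt_def by (auto simp: card_insert_if)
qed

lemma segr_Arot: "segr Arot w j t (c \<cdot>\<^sub>v rv \<phi>) = c \<cdot>\<^sub>v rv (\<phi> + real (cnt w j t) * th)"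
proof (induction t)
  case 0 thus ?case by simp
next
  case (Suc t)
  show ?case
  proof (cases "w (j + t) = 1")
    case True
    thus ?thesis using Suc by (simp add: Arot_def cnt_Suc Rm_smult algebra_simps)
  next
    case False
    have "c \<cdot>\<^sub>v rv (\<phi> + real (cnt w j t) * th) \<in> carrier_vec 2" by simp
    thus ?thesis using Suc False by (simp add: Arot_def cnt_Suc)
  qed
qed

lemma nd_run_Arot: "nd_run Arot w k = rv (real (cnt w 0 k) * th)"
proof -
  have "nd_run Arot w k = segr Arot w 0 k (rv 0)" by (simp add: nd_run_segr Arot_def)
  moreover have "segr Arot w 0 k (rv 0) = rv (real (cnt w 0 k) * th)"
    using segr_Arot[of w 0 k 1 0] by simp
  ultimately show ?thesis by simp
qed

lemma psi_Arot:
  assumes "\<psi> \<in> qacc Arot" "unit_vec (qdim Arot) \<psi>"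
  shows "\<psi> = (\<psi> $ 0) \<cdot>\<^sub>v rv 0 \<and> cmod (\<psi> $ 0) = 1"
proof
  have c: "\<psi> \<in> carrier_vec 2" "\<psi> $ 1 = 0" using assms by (auto simp: Arot_def)
  show "\<psi> = (\<psi> $ 0) \<cdot>\<^sub>v rv 0"
  proof (rule eq_vecI)
    fix i assume "i < dim_vec ((\<psi> $ 0) \<cdot>\<^sub>v rv 0)"
    hence "i = 0 \<or> i = 1" by (auto simp: rv_def)
    thus "\<psi> $ i = ((\<psi> $ 0) \<cdot>\<^sub>v rv 0) $ i" using c by (auto simp: rv_def)
  qed (use c in \<open>auto simp: rv_def\<close>)
  have "nrm2 \<psi> = 1" using assms by (simp add: unit_vec_nrm2 Arot_def)
  hence "(cmod (\<psi> $ 0))\<^sup>2 = 1" using c by (simp add: nrm2_def lessThan_atLeast0 sum2)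
  thus "cmod (\<psi> $ 0) = 1" using norm_ge_zero[of "\<psi> $ 0"] by (auto simp: power2_eq_1_iff)
qed

lemma val_Arot:
  assumes "\<psi> \<in> qacc Arot" "unit_vec (qdim Arot) \<psi>"
  shows "(cmod (braket \<psi> (c \<cdot>\<^sub>v rv \<phi>)))\<^sup>2 = (cmod c)\<^sup>2 * (cos \<phi>)\<^sup>2"
proof -
  have p: "\<psi> = (\<psi> $ 0) \<cdot>\<^sub>v rv 0" "cmod (\<psi> $ 0) = 1" using psi_Arot[OF assms] by auto
  have "braket \<psi> (c \<cdot>\<^sub>v rv \<phi>) = cnj (\<psi> $ 0) * c * complex_of_real (cos \<phi>)"
    by (subst p(1)) (simp add: braket_sum rv_def sum2 lessThan_atLeast0)
  hence "cmod (braket \<psi> (c \<cdot>\<^sub>v rv \<phi>)) = cmod c * \<bar>cos \<phi>\<bar>"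
    using p(2) by (simp add: norm_mult)
  thus ?thesis by (simp add: power_mult_distrib)
qed

section \<open>Values of specific words\<close>

definition wA :: "nat \<Rightarrow> nat" where "wA = (\<lambda>_. 0)"
definition wB :: "nat \<Rightarrow> nat" where "wB = (\<lambda>_. 1)"
definition wpre :: "nat \<Rightarrow> nat \<Rightarrow> nat \<Rightarrow> nat" where
  "wpre k j = (\<lambda>i. if k \<le> i \<and> i < k + j then 1 else 0)"

lemma wA_in: "\<forall>i. wA i \<in> {0, 1}" by (simp add: wA_def)
lemma wB_in: "\<forall>i. wB i \<in> {0, 1}" by (simp add: wB_def)
lemma wpre_in: "\<forall>i. wpre k j i \<in> {0, 1}" by (simp add: wpre_def)

lemma cnt_wA: "cnt wA a t = 0" by (simp add: cnt_def wA_def)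
lemma cnt_wB: "cnt wB a t = t" by (simp add: cnt_def wB_def)

lemma cnt_wpre_full: "k + j \<le> n \<Longrightarrow> cnt (wpre k j) 0 n = j"
proof -
  assume a: "k + j \<le> n"
  have "{r. r < n \<and> wpre k j (0 + r) = 1} = {k..<k + j}" using a by (auto simp: wpre_def)
  thus ?thesis by (simp add: cnt_def)
qed

lemma cnt_wpre0: "cnt (wpre 0 n) a t = min t (n - a)"
proof -
  have "{r. r < t \<and> wpre 0 n (a + r) = 1} = {..<min t (n - a)}" by (auto simp: wpre_def)
  thus ?thesis by (simp add: cnt_def)
qed

lemma val_Arot1:
  assumes "\<psi> \<in> qacc Arot" "unit_vec (qdim Arot) \<psi>"
  shows "(cmod (braket \<psi> (rv \<phi>)))\<^sup>2 = (cos \<phi>)\<^sup>2"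
  using val_Arot[OF assms, of 1 \<phi>] by simp

lemma rv0_qacc: "rv 0 \<in> qacc Arot" "unit_vec (qdim Arot) (rv 0)"
  using wf_Arot by (auto simp: Arot_def rv_def qauto_wf_def)

lemma N1: "fval ND Arot wA = 1"
proof -
  have "fset ND Arot wA = {1}"
  proof
    show "fset ND Arot wA \<subseteq> {1}"
    proof
      fix x assume "x \<in> fset ND Arot wA"
      then obtain \<psi> ns where x: "x = Inf (range (\<lambda>i. (cmod (braket \<psi> (run ND Arot wA \<psi> ns (ns i))))\<^sup>2))"
        and p: "\<psi> \<in> qacc Arot" "unit_vec (qdim Arot) \<psi>" unfolding fset_def by auto
      have feq: "(\<lambda>i. (cmod (braket \<psi> (run ND Arot wA \<psi> ns (ns i))))\<^sup>2) = (\<lambda>i. 1)"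
        using val_Arot1[OF p] by (simp add: run_def nd_run_Arot cnt_wA)
      show "x \<in> {1}" unfolding x by (subst feq) simp
    qed
    show "{1} \<subseteq> fset ND Arot wA"
    proof -
      have feq: "(\<lambda>i. (cmod (braket (rv 0) (run ND Arot wA (rv 0) id (id i))))\<^sup>2) = (\<lambda>i. 1)"
        using val_Arot1[OF rv0_qacc] by (simp add: run_def nd_run_Arot cnt_wA)
      have "Inf (range (\<lambda>i. (cmod (braket (rv 0) (run ND Arot wA (rv 0) id (id i))))\<^sup>2)) = 1"
        by (subst feq) simp
      moreover have "strict_mono (id :: nat \<Rightarrow> nat)" by (simp add: strict_mono_def)
      ultimately have "1 \<in> fset ND Arot wA" unfolding fset_def mem_Collect_eq
        by (intro exI[of _ "rv 0"] exI[of _ id]) (use rv0_qacc in auto)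
      thus ?thesis by simp
    qed
  qed
  hence "fval ND Arot wA = Sup {0, 1::real}" by (simp add: fval_fset)
  also have "\<dots> = 1" by (rule cSup_eq_maximum) auto
  finally show ?thesis .
qed

lemma N2: "fval ND Arot (wpre k j) \<le> (cos (real j * th))\<^sup>2"
proof (rule fval_le)
  fix \<psi> and ns :: "nat \<Rightarrow> nat" assume p: "\<psi> \<in> qacc Arot" "unit_vec (qdim Arot) \<psi>" and ns: "strict_mono ns"
  let ?f = "\<lambda>i. (cmod (braket \<psi> (run ND Arot (wpre k j) \<psi> ns (ns i))))\<^sup>2"
  have "Inf (range ?f) \<le> ?f (k + j)" by (rule Inf_le_term) auto
  also have "?f (k + j) = (cos (real j * th))\<^sup>2"
  proof -
    have "k + j \<le> ns (k + j)" using ns by (rule strict_mono_imp_increasing)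
    thus ?thesis using val_Arot1[OF p] by (simp add: run_def nd_run_Arot cnt_wpre_full)
  qed
  finally show "Inf (range ?f) \<le> (cos (real j * th))\<^sup>2" .
qed simp

lemma D1: "fval D Arot wB = 1"
proof (rule antisym)
  show "fval D Arot wB \<le> 1"
  proof (rule fval_le)
    fix \<psi> and ns :: "nat \<Rightarrow> nat" assume p: "\<psi> \<in> qacc Arot" "unit_vec (qdim Arot) \<psi>" and ns: "strict_mono ns"
    let ?f = "\<lambda>i. (cmod (braket \<psi> (run D Arot wB \<psi> ns (ns i))))\<^sup>2"
    have "Inf (range ?f) \<le> ?f 0" by (rule Inf_le_term) auto
    also have "\<dots> \<le> 1" using term_le1[OF p(2)] run_unit[OF wf_Arot wB_in p(2)] by auto
    finally show "Inf (range ?f) \<le> 1" .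
  qed simp
  show "1 \<le> fval D Arot wB"
  proof (rule field_le_epsilon)
    fix e :: real assume e: "0 < e"
    obtain d where d: "d \<ge> 1" "(cos (real d * th))\<^sup>2 \<ge> 1 - e" using approx_one[OF e] by auto
    define ns where "ns = (\<lambda>i::nat. i * d)"
    have ns: "strict_mono ns" unfolding ns_def strict_mono_Suc_iff using d by simp
    let ?f = "\<lambda>i. (cmod (braket (rv 0) (run D Arot wB (rv 0) ns (ns i))))\<^sup>2"
    have "?f i \<ge> 1 - e" for i
    proof (cases i)
      case 0
      have "run D Arot wB (rv 0) ns (ns i) = rv 0" using 0 by (simp add: run_def ns_def Arot_def)
      thus ?thesis using val_Arot1[OF rv0_qacc, of 0] e by simp
    next
      case (Suc i')
      have "run D Arot wB (rv 0) ns (ns i) = segr Arot wB (ns i') (ns (Suc i') - ns i') (rv 0)"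
        unfolding run_def Suc using d_run_ns_Suc[OF ns] by simp
      also have "ns (Suc i') - ns i' = d" by (simp add: ns_def)
      also have "segr Arot wB (ns i') d (rv 0) = rv (real d * th)"
        using segr_Arot[of wB "ns i'" d 1 0] by (simp add: cnt_wB)
      finally show ?thesis using val_Arot1[OF rv0_qacc] d by simp
    qed
    hence "Inf (range ?f) \<ge> 1 - e" by (intro Inf_ge) auto
    moreover have "Inf (range ?f) \<le> fval D Arot wB"
      by (rule fval_ge[OF wf_Arot wB_in rv0_qacc ns])
    ultimately show "1 \<le> fval D Arot wB + e" by linarith
  qed
qed

lemma D2:
  assumes n: "n \<ge> 1"
  shows "fval D Arot (wpre 0 n) < 1"
proof -
  define M where "M = Max ((\<lambda>j. (cos (real j * th))\<^sup>2) ` {1..n})"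
  have fin: "finite ((\<lambda>j. (cos (real j * th))\<^sup>2) ` {1..n})" "(\<lambda>j. (cos (real j * th))\<^sup>2) ` {1..n} \<noteq> {}"
    using n by auto
  have M1: "M < 1" unfolding M_def using fin cos2_lt1 by (subst Max_less_iff) auto
  have Mge: "(cos (real j * th))\<^sup>2 \<le> M" if "j \<in> {1..n}" for j
    unfolding M_def using fin that by (intro Max_ge) auto
  have M0: "0 \<le> M" using Mge[of n] n by (meson atLeastAtMost_iff le_refl order_trans zero_le_power2)
  have "fval D Arot (wpre 0 n) \<le> M"
  proof (rule fval_le[OF _ M0])
    fix \<psi> and ns :: "nat \<Rightarrow> nat" assume p: "\<psi> \<in> qacc Arot" "unit_vec (qdim Arot) \<psi>" and ns: "strict_mono ns"
    let ?f = "\<lambda>i. (cmod (braket \<psi> (run D Arot (wpre 0 n) \<psi> ns (ns i))))\<^sup>2"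
    define i0 where "i0 = (LEAST i. n \<le> ns i)"
    have ex: "n \<le> ns n" using ns by (rule strict_mono_imp_increasing)
    have i0: "n \<le> ns i0" unfolding i0_def using ex by (rule LeastI)
    have lt: "\<not> n \<le> ns i" if "i < i0" for i using that unfolding i0_def by (rule not_less_Least)
    have "?f i0 \<le> M"
    proof (cases i0)
      case 0
      have "run D Arot (wpre 0 n) \<psi> ns (ns i0) = segr Arot (wpre 0 n) 0 (ns 0) (rv 0)"
        unfolding run_def 0 using d_run_ns0[OF ns] by (simp add: Arot_def)
      also have "\<dots> = rv (real n * th)"
        using segr_Arot[of "wpre 0 n" 0 "ns 0" 1 0] i0 0 by (simp add: cnt_wpre0)
      finally show ?thesis using val_Arot1[OF p] Mge[of n] n by simp
    next
      case (Suc i)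
      have a: "ns i < n" using lt[of i] Suc by simp
      have b: "n \<le> ns (Suc i)" using i0 Suc by simp
      obtain c where pf: "\<psi> = c \<cdot>\<^sub>v rv 0" "cmod c = 1" using psi_Arot[OF p] by blast
      have mn: "min (ns (Suc i) - ns i) (n - ns i) = n - ns i" using a b by simp
      have "run D Arot (wpre 0 n) \<psi> ns (ns i0) = segr Arot (wpre 0 n) (ns i) (ns (Suc i) - ns i) \<psi>"
        unfolding run_def Suc using d_run_ns_Suc[OF ns] by simp
      also have "\<dots> = c \<cdot>\<^sub>v rv (real (n - ns i) * th)"
        unfolding pf(1) segr_Arot cnt_wpre0 mn by simp
      finally have "?f i0 = (cmod c)\<^sup>2 * (cos (real (n - ns i) * th))\<^sup>2"
        using val_Arot[OF p] by simp
      also have "\<dots> = (cos (real (n - ns i) * th))\<^sup>2" using pf by simp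
      also have "\<dots> \<le> M" using a by (intro Mge) auto
      finally show ?thesis .
    qed
    moreover have "Inf (range ?f) \<le> ?f i0" by (rule Inf_le_term) auto
    ultimately show "Inf (range ?f) \<le> M" by linarith
  qed
  thus ?thesis using M1 by linarith
qed

section \<open>Closure properties for arbitrary automata\<close>

lemma unit_carrier_nrm2: "unit_vec n \<psi> \<Longrightarrow> \<psi> \<in> carrier_vec n \<and> nrm2 \<psi> = 1"
  by (simp add: unit_vec_nrm2)

lemma D_closure:
  assumes wf: "qauto_wf {0, 1} B" and fv: "fval D B wA > m" and m: "0 \<le> m" "m < 1"
  shows "\<exists>k d. d \<ge> 1 \<and> (\<forall>t. fval D B (wpre k (t * d)) > m)"
proof -
  obtain \<psi> ns where p: "\<psi> \<in> qacc B" "unit_vec (qdim B) \<psi>" and ns: "strict_mono ns"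
    and c: "Inf (range (\<lambda>i. (cmod (braket \<psi> (run D B wA \<psi> ns (ns i))))\<^sup>2)) > m"
    using fval_witness[OF fv m(1)] by blast
  define f where "f i = (cmod (braket \<psi> (d_run B wA \<psi> ns (ns i))))\<^sup>2" for i
  define c where "c = Inf (range f)"
  have cm: "c > m" using c by (simp add: c_def f_def run_def)
  have fc: "f i \<ge> c" for i unfolding c_def by (rule Inf_le_term) (simp add: f_def)
  define k where "k = ns 0"
  define U where "U = qtrans B 1"
  have U: "unitary_mat (qdim B) U" unfolding U_def using wf_unitary[OF wf] by simp
  have pc: "\<psi> \<in> carrier_vec (qdim B)" "nrm2 \<psi> = 1" using unit_carrier_nrm2[OF p(2)] by auto
  have sm: "sqrt m < 1" using m by simp
  obtain K where K: "infinite K" "\<forall>k\<in>K. 0 < k \<and> Re (braket \<psi> (it U k \<psi>)) > 1 - (1 - sqrt m) / 2"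
    using recurrence_re[OF U pc, of "(1 - sqrt m) / 2"] sm by auto
  obtain d where dK: "d \<in> K" using K(1) by (metis finite.emptyI ex_in_conv)
  define g where "g = (cmod (braket \<psi> (it U d \<psi>)))\<^sup>2"
  have d1: "d \<ge> 1" using K dK by auto
  have gm: "g > m"
  proof -
    have h: "1 - (1 - sqrt m) / 2 < Re (braket \<psi> (it U d \<psi>))" using K dK by auto
    have h2: "sqrt m \<le> 1 - (1 - sqrt m) / 2" using sm m by (simp add: field_simps)
    have r: "sqrt m < Re (braket \<psi> (it U d \<psi>))" by (rule order_le_less_trans[OF h2 h])
    have "sqrt m \<ge> 0" using m(1) by simp
    hence "(sqrt m)\<^sup>2 < (Re (braket \<psi> (it U d \<psi>)))\<^sup>2" using r by (intro power_strict_mono) auto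
    also have "\<dots> \<le> g" unfolding g_def using abs_Re_le_cmod
      by (metis abs_le_square_iff abs_norm_cancel)
    finally show ?thesis using m by simp
  qed
  have "fval D B (wpre k (t * d)) > m" for t
  proof -
    define w' where "w' = wpre k (t * d)"
    define ns' where "ns' i = (if i \<le> t then k + i * d else ns (i - t) + t * d)" for i
    have nsk: "ns i \<ge> k" for i unfolding k_def using ns strict_mono_less_eq by blast
    have ns': "strict_mono ns'"
      unfolding strict_mono_Suc_iff
    proof
      fix i
      show "ns' i < ns' (Suc i)"
      proof (cases "Suc i \<le> t")
        case True thus ?thesis using d1 by (simp add: ns'_def)
      next
        case False
        show ?thesis
        proof (cases "i = t")
          case True
          have "ns 0 < ns 1" using ns by (simp add: strict_mono_def)
          thus ?thesis using True by (simp add: ns'_def k_def)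
        next
          case False
          hence it: "t < i" using \<open>\<not> Suc i \<le> t\<close> by simp
          have "ns (i - t) < ns (Suc i - t)" using ns it by (simp add: strict_mono_def)
          thus ?thesis using it by (simp add: ns'_def)
        qed
      qed
    qed
    define f' where "f' i = (cmod (braket \<psi> (d_run B w' \<psi> ns' (ns' i))))\<^sup>2" for i
    have f'ge: "f' i \<ge> min c g" for i
    proof (cases i)
      case 0
      have "d_run B w' \<psi> ns' (ns' 0) = segr B w' 0 k (qinit B)"
        using d_run_ns0[OF ns'] by (simp add: ns'_def)
      also have "\<dots> = segr B wA 0 k (qinit B)"
        by (rule segr_cong) (simp add: w'_def wpre_def wA_def)
      also have "\<dots> = d_run B wA \<psi> ns (ns 0)" using d_run_ns0[OF ns] by (simp add: k_def)
      finally have "f' i = f 0" using 0 by (simp add: f'_def f_def)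
      thus ?thesis using fc[of 0] by simp
    next
      case (Suc i')
      show ?thesis
      proof (cases "Suc i' \<le> t")
        case True
        have "d_run B w' \<psi> ns' (ns' (Suc i')) = segr B w' (ns' i') (ns' (Suc i') - ns' i') \<psi>"
          by (rule d_run_ns_Suc[OF ns'])
        also have "ns' i' = k + i' * d" using True by (simp add: ns'_def)
        also have "ns' (Suc i') - (k + i' * d) = d" using True by (simp add: ns'_def)
        also have "segr B w' (k + i' * d) d \<psi> = it U d \<psi>"
          unfolding U_def
        proof (rule segr_const, intro allI impI)
          fix r assume r: "r < d"
          have "i' * d + r < t * d"
          proof -
            have "i' * d + r < i' * d + d" using r by simp
            also have "\<dots> = Suc i' * d" by simp
            also have "\<dots> \<le> t * d" using True by (intro mult_right_mono) auto
            finally show ?thesis .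
          qed
          thus "w' (k + i' * d + r) = 1" by (simp add: w'_def wpre_def)
        qed
        finally have "f' i = g" using Suc by (simp add: f'_def g_def)
        thus ?thesis by simp
      next
        case False
        define j where "j = i' - t"
        have ij: "i' = t + j" using False by (simp add: j_def)
        have e1: "ns' (Suc i') = ns (Suc j) + t * d" using False by (simp add: ns'_def ij Suc_diff_le)
        have e2: "ns' i' = ns j + t * d"
          by (cases "j = 0") (simp_all add: ns'_def ij k_def)
        have "d_run B w' \<psi> ns' (ns' (Suc i')) = segr B w' (ns' i') (ns' (Suc i') - ns' i') \<psi>"
          by (rule d_run_ns_Suc[OF ns'])
        also have "\<dots> = segr B w' (ns j + t * d) (ns (Suc j) - ns j) \<psi>" by (simp add: e1 e2)
        also have "\<dots> = segr B wA (ns j) (ns (Suc j) - ns j) \<psi>"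
        proof (rule segr_cong, intro allI impI)
          fix r assume "r < ns (Suc j) - ns j"
          have "k \<le> ns j" by (rule nsk)
          thus "w' (ns j + t * d + r) = wA (ns j + r)" by (simp add: w'_def wpre_def wA_def)
        qed
        also have "\<dots> = d_run B wA \<psi> ns (ns (Suc j))" using d_run_ns_Suc[OF ns] by simp
        finally have "f' i = f (Suc j)" using Suc by (simp add: f'_def f_def)
        thus ?thesis using fc[of "Suc j"] by simp
      qed
    qed
    have "min c g > m" using cm gm by simp
    also have "min c g \<le> Inf (range f')" by (rule Inf_ge) (use f'ge in auto)
    also have "Inf (range f') \<le> fval D B w'"
      using fval_ge[OF wf _ p ns', of w' D] wpre_in by (simp add: f'_def run_def w'_def)
    finally show ?thesis by (simp add: w'_def)
  qed
  thus ?thesis using d1 by blast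
qed

lemma ND_closure:
  assumes wf: "qauto_wf {0, 1} B" and fv: "fval ND B wB > l" and l: "0 \<le> l"
  shows "\<exists>n\<ge>1. fval ND B (wpre 0 n) > l"
proof -
  obtain \<psi> ns where p: "\<psi> \<in> qacc B" "unit_vec (qdim B) \<psi>" and ns: "strict_mono ns"
    and c: "Inf (range (\<lambda>i. (cmod (braket \<psi> (run ND B wB \<psi> ns (ns i))))\<^sup>2)) > l"
    using fval_witness[OF fv l] by blast
  define f where "f i = (cmod (braket \<psi> (nd_run B wB (ns i))))\<^sup>2" for i
  define c where "c = Inf (range f)"
  have cl: "c > l" using c by (simp add: c_def f_def run_def)
  have fc: "f i \<ge> c" for i unfolding c_def by (rule Inf_le_term) (simp add: f_def)
  define n where "n = ns 1"
  have "ns 0 < ns 1" using ns by (simp add: strict_mono_def)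
  hence n1: "n \<ge> 1" unfolding n_def by simp
  define x where "x = nd_run B wB n"
  have xc: "x \<in> carrier_vec (qdim B)" "nrm2 x = 1" using nd_run_unit[OF wf wB_in] by (auto simp: x_def)
  have pc: "\<psi> \<in> carrier_vec (qdim B)" "nrm2 \<psi> = 1" using unit_carrier_nrm2[OF p(2)] by auto
  define U where "U = qtrans B 0"
  have U: "unitary_mat (qdim B) U" unfolding U_def using wf_unitary[OF wf] by simp
  define a where "a = sqrt c"
  define b where "b = sqrt l"
  have ab: "b < a" "0 \<le> b" using cl l by (auto simp: a_def b_def)
  have xa: "cmod (braket \<psi> x) \<ge> a"
  proof -
    have "c \<le> (cmod (braket \<psi> x))\<^sup>2" using fc[of 1] by (simp add: f_def x_def n_def)
    hence "sqrt c \<le> sqrt ((cmod (braket \<psi> x))\<^sup>2)" by (rule real_sqrt_le_mono)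
    thus ?thesis by (simp add: a_def)
  qed
  obtain K where K: "infinite K" "\<forall>k\<in>K. 0 < k \<and> nrm2 (it U k x - x) < ((a - b) / 2)\<^sup>2"
    using recurrence[OF U xc, of "((a - b) / 2)\<^sup>2"] ab by auto
  have good: "(cmod (braket \<psi> (it U k x)))\<^sup>2 \<ge> ((a + b) / 2)\<^sup>2" if k: "k \<in> K" for k
  proof -
    have ic: "it U k x \<in> carrier_vec (qdim B)" by (rule it_carrier[OF U xc(1)])
    have "cmod (braket \<psi> (it U k x - x)) \<le> sqrt (nrm2 \<psi>) * sqrt (nrm2 (it U k x - x))"
      by (rule CS_braket) (use pc ic xc in auto)
    also have "\<dots> = sqrt (nrm2 (it U k x - x))" using pc by simp
    also have "\<dots> < sqrt (((a - b) / 2)\<^sup>2)" using K k by (intro real_sqrt_less_mono) auto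
    also have "\<dots> = (a - b) / 2" using ab by simp
    finally have d: "cmod (braket \<psi> (it U k x - x)) < (a - b) / 2" .
    have eq: "braket \<psi> (it U k x - x) = braket \<psi> (it U k x) - braket \<psi> x"
      by (rule braket_minus) (use pc ic xc in auto)
    have "cmod (braket \<psi> x) = cmod (braket \<psi> (it U k x) - braket \<psi> (it U k x - x))"
      unfolding eq by simp
    also have "\<dots> \<le> cmod (braket \<psi> (it U k x)) + cmod (braket \<psi> (it U k x - x))"
      by (rule norm_triangle_ineq4)
    finally have "cmod (braket \<psi> x) \<le> cmod (braket \<psi> (it U k x)) + cmod (braket \<psi> (it U k x - x))" .
    hence ge: "cmod (braket \<psi> (it U k x)) \<ge> (a + b) / 2" using xa d by argo
    have "0 \<le> (a + b) / 2" using ab by simp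
    thus ?thesis using ge by (intro power_mono) auto
  qed
  have cl': "((a + b) / 2)\<^sup>2 > l"
  proof -
    have "b < (a + b) / 2" using ab by simp
    hence "b\<^sup>2 < ((a + b) / 2)\<^sup>2" using ab by (intro power_strict_mono) auto
    thus ?thesis using l by (simp add: b_def)
  qed
  define w' where "w' = wpre 0 n"
  define ns' where "ns' i = n + Infinite_Set.enumerate K i" for i
  have ns': "strict_mono ns'" using strict_mono_enumerate[OF K(1)] by (simp add: ns'_def strict_mono_def)
  have run': "nd_run B w' (ns' i) = it U (Infinite_Set.enumerate K i) x" for i
  proof -
    have "nd_run B w' (ns' i) = segr B w' n (Infinite_Set.enumerate K i) (nd_run B w' n)"
      unfolding ns'_def by (rule nd_run_add)
    also have "nd_run B w' n = x"
    proof -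
      have "nd_run B w' n = segr B w' 0 n (qinit B)" by (rule nd_run_segr)
      also have "\<dots> = segr B wB 0 n (qinit B)"
        by (rule segr_cong) (simp add: w'_def wpre_def wB_def)
      also have "\<dots> = x" by (simp add: x_def nd_run_segr)
      finally show ?thesis .
    qed
    also have "segr B w' n (Infinite_Set.enumerate K i) x = it U (Infinite_Set.enumerate K i) x"
      unfolding U_def by (rule segr_const) (simp add: w'_def wpre_def)
    finally show ?thesis .
  qed
  have "l < ((a + b) / 2)\<^sup>2" by (rule cl')
  also have "((a + b) / 2)\<^sup>2 \<le> Inf (range (\<lambda>i. (cmod (braket \<psi> (run ND B w' \<psi> ns' (ns' i))))\<^sup>2))"
    by (rule Inf_ge) (use good enumerate_in_set[OF K(1)] in \<open>auto simp: run_def run'\<close>)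
  also have "\<dots> \<le> fval ND B w'"
    using fval_ge[OF wf _ p ns', of w' ND] wpre_in by (simp add: w'_def)
  finally show ?thesis using n1 by (auto simp: w'_def)
qed

lemma part1:
  assumes l: "0 < l" "l < 1" and m: "0 \<le> m" "m < 1"
  shows "\<not> QBA_gt ND {0, 1} l \<subseteq> QBA_gt D {0, 1} m"
proof
  assume sub: "QBA_gt ND {0, 1} l \<subseteq> QBA_gt D {0, 1} m"
  have "lang_gt ND {0, 1} Arot l \<in> QBA_gt ND {0, 1} l" unfolding QBA_gt_def using wf_Arot by blast
  with sub obtain B where B: "qauto_wf {0, 1} B" and eq: "lang_gt ND {0, 1} Arot l = lang_gt D {0, 1} B m"
    unfolding QBA_gt_def by blast
  have "wA \<in> lang_gt ND {0, 1} Arot l" using N1 l wA_in by (simp add: lang_gt_def)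
  hence "wA \<in> lang_gt D {0, 1} B m" using eq by simp
  hence "fval D B wA > m" by (simp add: lang_gt_def)
  then obtain k d where d: "d \<ge> 1" and all: "\<forall>t. fval D B (wpre k (t * d)) > m"
    using D_closure[OF B _ m] by blast
  obtain t where t: "(cos (real (t * d) * th))\<^sup>2 \<le> l" using density[OF d l(1)] by blast
  have "wpre k (t * d) \<in> lang_gt D {0, 1} B m" using all wpre_in by (simp add: lang_gt_def)
  hence "wpre k (t * d) \<in> lang_gt ND {0, 1} Arot l" using eq by simp
  hence "fval ND Arot (wpre k (t * d)) > l" by (simp add: lang_gt_def)
  moreover have "fval ND Arot (wpre k (t * d)) \<le> l" using N2[of k "t * d"] t by linarith
  ultimately show False by simp
qed

lemma part2:
  assumes l: "0 \<le> l" "l < 1"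
  shows "\<not> QBA_eq1 ND {0, 1} \<subseteq> QBA_gt D {0, 1} l"
proof
  assume sub: "QBA_eq1 ND {0, 1} \<subseteq> QBA_gt D {0, 1} l"
  have "lang_eq1 ND {0, 1} Arot \<in> QBA_eq1 ND {0, 1}" unfolding QBA_eq1_def using wf_Arot by blast
  with sub obtain B where B: "qauto_wf {0, 1} B" and eq: "lang_eq1 ND {0, 1} Arot = lang_gt D {0, 1} B l"
    unfolding QBA_gt_def by blast
  have "wA \<in> lang_eq1 ND {0, 1} Arot" using N1 wA_in by (simp add: lang_eq1_def)
  hence "wA \<in> lang_gt D {0, 1} B l" using eq by simp
  hence "fval D B wA > l" by (simp add: lang_gt_def)
  then obtain k d where d: "d \<ge> 1" and all: "\<forall>t. fval D B (wpre k (t * d)) > l"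
    using D_closure[OF B _ l] by blast
  have "fval D B (wpre k (1 * d)) > l" using all by blast
  hence "wpre k d \<in> lang_gt D {0, 1} B l" using wpre_in by (simp add: lang_gt_def)
  hence "wpre k d \<in> lang_eq1 ND {0, 1} Arot" using eq by simp
  hence "fval ND Arot (wpre k d) = 1" by (simp add: lang_eq1_def)
  moreover have "fval ND Arot (wpre k d) < 1" using N2[of k d] cos2_lt1[OF d] by linarith
  ultimately show False by simp
qed

lemma part3:
  assumes l: "0 \<le> l" "l < 1"
  shows "\<not> QBA_eq1 D {0, 1} \<subseteq> QBA_gt ND {0, 1} l"
proof
  assume sub: "QBA_eq1 D {0, 1} \<subseteq> QBA_gt ND {0, 1} l"
  have "lang_eq1 D {0, 1} Arot \<in> QBA_eq1 D {0, 1}" unfolding QBA_eq1_def using wf_Arot by blast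
  with sub obtain B where B: "qauto_wf {0, 1} B" and eq: "lang_eq1 D {0, 1} Arot = lang_gt ND {0, 1} B l"
    unfolding QBA_gt_def by blast
  have "wB \<in> lang_eq1 D {0, 1} Arot" using D1 wB_in by (simp add: lang_eq1_def)
  hence "wB \<in> lang_gt ND {0, 1} B l" using eq by simp
  hence "fval ND B wB > l" by (simp add: lang_gt_def)
  then obtain n where n: "n \<ge> 1" and fv: "fval ND B (wpre 0 n) > l"
    using ND_closure[OF B _ l(1)] by blast
  have "wpre 0 n \<in> lang_gt ND {0, 1} B l" using fv wpre_in by (simp add: lang_gt_def)
  hence "wpre 0 n \<in> lang_eq1 D {0, 1} Arot" using eq by simp
  hence "fval D Arot (wpre 0 n) = 1" by (simp add: lang_eq1_def)
  moreover have "fval D Arot (wpre 0 n) < 1" by (rule D2[OF n])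
  ultimately show False by simp
qed

theorem theorem7:
  shows "(\<forall>l m::real. 0 < l \<and> l < 1 \<and> 0 \<le> m \<and> m < 1 \<longrightarrow>
            (\<exists>\<Sigma>. finite \<Sigma> \<and> \<Sigma> \<noteq> {} \<and> \<not> QBA_gt ND \<Sigma> l \<subseteq> QBA_gt D \<Sigma> m))
       \<and> (\<forall>l::real. 0 \<le> l \<and> l < 1 \<longrightarrow>
            (\<exists>\<Sigma>. finite \<Sigma> \<and> \<Sigma> \<noteq> {} \<and> \<not> QBA_eq1 ND \<Sigma> \<subseteq> QBA_gt D \<Sigma> l))
       \<and> (\<forall>l::real. 0 \<le> l \<and> l < 1 \<longrightarrow>
            (\<exists>\<Sigma>. finite \<Sigma> \<and> \<Sigma> \<noteq> {} \<and> \<not> QBA_eq1 D \<Sigma> \<subseteq> QBA_gt ND \<Sigma> l))"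
proof (intro conjI allI impI)
  fix l m :: real assume "0 < l \<and> l < 1 \<and> 0 \<le> m \<and> m < 1"
  thus "\<exists>\<Sigma>. finite \<Sigma> \<and> \<Sigma> \<noteq> {} \<and> \<not> QBA_gt ND \<Sigma> l \<subseteq> QBA_gt D \<Sigma> m"
    using part1 by (intro exI[of _ "{0, 1}"]) auto
next
  fix l :: real assume "0 \<le> l \<and> l < 1"
  thus "\<exists>\<Sigma>. finite \<Sigma> \<and> \<Sigma> \<noteq> {} \<and> \<not> QBA_eq1 ND \<Sigma> \<subseteq> QBA_gt D \<Sigma> l"
    using part2 by (intro exI[of _ "{0, 1}"]) auto
next
  fix l :: real assume "0 \<le> l \<and> l < 1"
  thus "\<exists>\<Sigma>. finite \<Sigma> \<and> \<Sigma> \<noteq> {} \<and> \<not> QBA_eq1 D \<Sigma> \<subseteq> QBA_gt ND \<Sigma> l"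
    using part3 by (intro exI[of _ "{0, 1}"]) auto
qed

end
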